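(* Let $0 \le \eta \le 1$ and let $X$ be a Bernoulli random variable with $P_\theta(X=1) = 1 - P_\theta(X=0) = \theta$, where the parameter $\theta$ is known to lie in $\Omega = \{\theta : 0 \le \theta \le \eta\}$. Consider estimators $\delta(X)$ of $\theta$ (i.e., real-valued functions of $X$) under the squared error loss $L(\theta,d) = (\theta-d)^2$. Then a minimax estimator, i.e., an estimator $\delta$ minimizing $$\sup_{0\le\theta\le\eta} \mathbf{E}_\theta\big(\theta - \delta(X)\big)^2,$$ equivalently a pair of real numbers $(a,b)=(\delta(0),\delta(1))$ minimizing $$\sup_{0\le\theta\le\eta}\Big[(2a-2b+1)\theta^2 + (b^2-a^2-2a)\theta + a^2\Big],$$ is given by $$\delta(X=0) = a^* = \begin{cases} \sqrt{1-\eta} - (1-\eta) & \text{if } 0 \le \eta \le \tfrac34,\\ \tfrac14 & \text{if } \tfrac34 < \eta \le 1,\end{cases}$$ and $$\delta(X=1) = b^* = \min\{\eta, \tfrac34\} = \begin{cases} \eta & \text{if } \eta \le \tfrac34,\\ \tfrac34 & \text{if } \eta > \tfrac34.\end{cases}$$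
   Context: Based on a single observation $X$ (sample size $n=1$). An estimator is determined by its two values $\delta(0)=a$ and $\delta(1)=b$, and its risk is $\mathbf{E}_\theta(\theta-\delta(X))^2 = (\theta-a)^2(1-\theta) + (\theta-b)^2\theta$. *)

theory Defs
  imports Complex_Main
begin

text \<open>Risk of the estimator delta with delta(0) = a, delta(1) = b for a single
  Bernoulli(theta) observation under squared error loss:
  E_theta (theta - delta X)^2 = (theta - a)^2 (1 - theta) + (theta - b)^2 theta.\<close>
definition bern_risk :: "real \<Rightarrow> real \<Rightarrow> real \<Rightarrow> real" where
  "bern_risk a b \<theta> = (\<theta> - a)\<^sup>2 * (1 - \<theta>) + (\<theta> - b)\<^sup>2 * \<theta>"

definition max_risk :: "real \<Rightarrow> real \<Rightarrow> real \<Rightarrow> real" where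
  "max_risk \<eta> a b = (SUP \<theta>\<in>{0..\<eta>}. bern_risk a b \<theta>)"

definition a_star :: "real \<Rightarrow> real" where
  "a_star \<eta> = (if \<eta> \<le> 3/4 then sqrt (1 - \<eta>) - (1 - \<eta>) else 1/4)"

definition b_star :: "real \<Rightarrow> real" where
  "b_star \<eta> = min \<eta> (3/4)"

end

theory Submission
  imports Defs
begin

lemma bdd: "bdd_above ((bern_risk a b) ` {0..(e::real)})"
proof (cases "{0..e} = {}")
  case True then show ?thesis by simp
next
  case False
  have "continuous_on {0..e} (bern_risk a b)" unfolding bern_risk_def
    by (intro continuous_intros)
  then obtain x where "\<forall>y\<in>{0..e}. bern_risk a b y \<le> bern_risk a b x"
    using continuous_attains_sup[OF compact_Icc False] by blast
  then show ?thesis by (intro bdd_aboveI2) auto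
qed

lemma upper: assumes "t \<in> {0..(e::real)}" shows "bern_risk a b t \<le> max_risk e a b"
  unfolding max_risk_def using bdd assms by (rule cSUP_upper2) simp

lemma star_bound:
  assumes "\<And>t. t \<in> {0..(e::real)} \<Longrightarrow> bern_risk a b t \<le> M" "0 \<le> e"
  shows "max_risk e a b \<le> M"
  unfolding max_risk_def using assms by (intro cSUP_least) auto

theorem theorem1:
  fixes \<eta> :: real
  assumes "0 \<le> \<eta>" and "\<eta> \<le> 1"
  shows "\<forall>a b. max_risk \<eta> (a_star \<eta>) (b_star \<eta>) \<le> max_risk \<eta> a b"
proof (intro allI)
  fix a b
  show "max_risk \<eta> (a_star \<eta>) (b_star \<eta>) \<le> max_risk \<eta> a b"
  proof (cases "\<eta> \<le> 3/4")
    case True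
    define s where "s = sqrt (1 - \<eta>)"
    have s2: "s^2 = 1 - \<eta>" using assms s_def by simp
    have s0: "0 \<le> s" using s_def assms by simp
    have sh: "1/2 \<le> s"
    proof -
      have "sqrt (1/4) \<le> s" unfolding s_def using True by (intro real_sqrt_le_mono) simp
      moreover have "sqrt (1/4) = (1/2::real)" by (simp add: real_sqrt_divide)
      ultimately show ?thesis by simp
    qed
    have s1: "s \<le> 1" using s_def assms by simp
    have he: "\<eta> = 1 - s^2" using s2 by simp
    define M where "M = (s * (1 - s))^2"
    have A: "a_star \<eta> = s - s^2" "b_star \<eta> = \<eta>" using True s2
      unfolding a_star_def b_star_def s_def by auto
    have "max_risk \<eta> (a_star \<eta>) (b_star \<eta>) \<le> M"
    proof (rule star_bound[OF _ assms(1)])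
      fix t assume t: "t \<in> {0..\<eta>}"
      have id: "bern_risk (a_star \<eta>) (b_star \<eta>) t = M + (2*s - 1) * (t * (t - \<eta>))"
        unfolding A M_def bern_risk_def unfolding he by (simp add: power2_eq_square algebra_simps)
      have "(2*s - 1) * (t * (t - \<eta>)) \<le> 0"
        using t sh by (intro mult_nonneg_nonpos mult_nonneg_nonpos) auto
      then show "bern_risk (a_star \<eta>) (b_star \<eta>) t \<le> M" using id by simp
    qed
    also have "M \<le> max_risk \<eta> a b"
    proof (cases "\<bar>a\<bar> \<ge> s * (1 - s)")
      case True
      have "M \<le> a^2" unfolding M_def using True s0 s1
        by (metis abs_le_square_iff abs_of_nonneg mult_nonneg_nonneg diff_ge_0_iff_ge)
      also have "a^2 = bern_risk a b 0" by (simp add: bern_risk_def)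
      also have "\<dots> \<le> max_risk \<eta> a b" using assms by (intro upper) simp
      finally show ?thesis .
    next
      case False
      have "\<eta> - a \<ge> \<eta> - \<bar>a\<bar>" by simp
      moreover have "\<eta> - s*(1-s) = 1 - s" unfolding he by (simp add: power2_eq_square algebra_simps)
      ultimately have d: "\<eta> - a \<ge> 1 - s" using False by linarith
      have "s * (1 - s) \<le> s * (\<eta> - a)" using d s0 by (intro mult_left_mono) auto
      then have "M \<le> (s * (\<eta> - a))^2" unfolding M_def using s0 s1
        by (intro power_mono) auto
      also have "\<dots> = (\<eta> - a)^2 * (1 - \<eta>)" using s2 by (simp add: power_mult_distrib)
      also have "\<dots> \<le> bern_risk a b \<eta>" unfolding bern_risk_def using assms by simp
      also have "\<dots> \<le> max_risk \<eta> a b" using assms by (intro upper) simp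
      finally show ?thesis .
    qed
    finally show ?thesis .
  next
    case False
    have A: "a_star \<eta> = 1/4" "b_star \<eta> = 3/4" using False
      unfolding a_star_def b_star_def by auto
    have "max_risk \<eta> (a_star \<eta>) (b_star \<eta>) \<le> 1/16"
    proof (rule star_bound[OF _ assms(1)])
      fix t assume t: "t \<in> {0..\<eta>}"
      show "bern_risk (a_star \<eta>) (b_star \<eta>) t \<le> 1/16"
        unfolding A bern_risk_def by (simp add: power2_eq_square field_simps)
    qed
    also have "1/16 \<le> (1/3) * bern_risk a b 0 + (2/3) * bern_risk a b (3/4)"
    proof -
      have "(1/3) * bern_risk a b 0 + (2/3) * bern_risk a b (3/4) - 1/16 = (a - 1/4)^2/2 + (3/4 - b)^2 / 2"
        unfolding bern_risk_def by (simp add: power2_eq_square field_simps)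
      moreover have "0 \<le> (a - 1/4)^2/2 + (3/4 - b)^2 / 2" by simp
      ultimately show ?thesis by linarith
    qed
    also have "\<dots> \<le> (1/3) * max_risk \<eta> a b + (2/3) * max_risk \<eta> a b"
      using False assms by (intro add_mono mult_left_mono upper) auto
    also have "\<dots> = max_risk \<eta> a b" by simp
    finally show ?thesis .
  qed
qed

end
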